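(* Let $k\ge 2$, $n\ge 3$, $M=\{0,1,\dots,k-1\}$, and consider the positions $p\in M^n$ with the moves and the notation $B(p)$, $\bar x$, $T(m;j_1,\dots,j_{n-m})$ described in the context. (1) $M^n$ is the disjoint union of the trivial classes $(m)=\{p: |B(p)|=m\}$, $0\le m\le n$. (2) The sets $T(m;j_1,\dots,j_{n-m})$, for $1\le m\le n$ and integers $1\le j_1\le\dots\le j_{n-m}\le\lfloor (k-1)/2\rfloor$, are pairwise disjoint and cover all external positions. If it is not the case that ($m=1$ and $j_1<j_2<\dots<j_{n-1}<(k-1)/2$), then $T(m;j_1,\dots,j_{n-m})$ is exactly one connectivity class. If $m=1$ and $j_1<j_2<\dots<j_{n-1}<(k-1)/2$ (here $(k-1)/2$ need not be an integer), then $T(1;j_1,\dots,j_{n-1})$ is the union of exactly two connectivity classes: the set of its positions connected to $(0,j_1,\dots,j_{n-1})$, and the set of its positions not connected to it (which contains $(k-1,j_1,\dots,j_{n-1})$). Moreover, integers $1\le j_1<\dots<j_{n-1}<(k-1)/2$ exist only if $k\ge 2n$.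
   Context: Fix integers $k\ge 2$ (edge length) and $n\ge 3$ (dimension), $M=\{0,\dots,k-1\}$. A position is $p=(p_1,\dots,p_n)\in M^n$; the cubie in position $p$ occupies $\prod_i[p_i,p_i+1]\subset[0,k]^n$. Let $B(p)=\{i: p_i\in\{0,k-1\}\}$; $p$ is external if $B(p)\neq\emptyset$. For distinct $i,j\in\{1,\dots,n\}$ define $\psi_{i,j}:M^n\to M^n$ by $(\psi_{i,j}p)_i=k-1-p_j$, $(\psi_{i,j}p)_j=p_i$, $(\psi_{i,j}p)_l=p_l$ for $l\notin\{i,j\}$. A move is given by distinct $i,j$ and constants $c_l\in M$ ($l\notin\{i,j\}$): it sends every position $p$ with $p_l=c_l$ for all $l\notin\{i,j\}$ to $\psi_{i,j}(p)$ and fixes all other positions (rotation of a 2-dimensional layer; rotations of higher-dimensional layers are compositions of such moves). A combination is a finite sequence of moves, regarded as the composite permutation of $M^n$. Two positions are connected if some combination sends one to the other; connectivity classes are the resulting equivalence classes. For $x\in\{1,\dots,k-2\}$ put $\bar x=\min(x,k-1-x)$. For $1\le m\le n$ and $1\le j_1\le\dots\le j_{n-m}\le\lfloor (k-1)/2\rfloor$, $T(m;j_1,\dots,j_{n-m})$ is the set of positions $p$ with $|B(p)|=m$ such that the multiset $\{\bar p_i: i\notin B(p)\}$ equals $\{j_1,\dots,j_{n-m}\}$ (for $m=n$ the list is empty and $T$ is the set of all $p$ with $|B(p)|=n$). *)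

theory Defs
  imports Main "HOL-Library.Multiset"
begin

text \<open>Coordinates are indexed 0..n-1 (instead of 1..n); a position is a list of length n
  with entries in M = {0..k-1}.\<close>

definition positions :: "nat \<Rightarrow> nat \<Rightarrow> nat list set" where
  "positions k n = {p. length p = n \<and> (\<forall>x\<in>set p. x < k)}"

definition bdry :: "nat \<Rightarrow> nat list \<Rightarrow> nat set" where
  "bdry k p = {i. i < length p \<and> (p ! i = 0 \<or> p ! i = k - 1)}"

definition psi :: "nat \<Rightarrow> nat \<Rightarrow> nat \<Rightarrow> nat list \<Rightarrow> nat list" where
  "psi k i j p = p[i := k - 1 - p ! j, j := p ! i]"

definition is_move :: "nat \<Rightarrow> nat \<Rightarrow> nat \<times> nat \<times> (nat \<Rightarrow> nat) \<Rightarrow> bool" where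
  "is_move k n mv = (case mv of (i, j, c) \<Rightarrow>
      i < n \<and> j < n \<and> i \<noteq> j \<and> (\<forall>l<n. l \<noteq> i \<and> l \<noteq> j \<longrightarrow> c l < k))"

definition apply_move :: "nat \<Rightarrow> nat \<Rightarrow> nat \<times> nat \<times> (nat \<Rightarrow> nat) \<Rightarrow> nat list \<Rightarrow> nat list" where
  "apply_move k n mv p = (case mv of (i, j, c) \<Rightarrow>
      if (\<forall>l<n. l \<noteq> i \<and> l \<noteq> j \<longrightarrow> p ! l = c l) then psi k i j p else p)"

definition apply_comb :: "nat \<Rightarrow> nat \<Rightarrow> (nat \<times> nat \<times> (nat \<Rightarrow> nat)) list \<Rightarrow> nat list \<Rightarrow> nat list" where
  "apply_comb k n ms p = foldl (\<lambda>q mv. apply_move k n mv q) p ms"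

definition connected_pos :: "nat \<Rightarrow> nat \<Rightarrow> nat list \<Rightarrow> nat list \<Rightarrow> bool" where
  "connected_pos k n p q = (\<exists>ms. (\<forall>mv\<in>set ms. is_move k n mv) \<and> apply_comb k n ms p = q)"

definition conn_rel :: "nat \<Rightarrow> nat \<Rightarrow> (nat list \<times> nat list) set" where
  "conn_rel k n = {(p, q). p \<in> positions k n \<and> q \<in> positions k n \<and> connected_pos k n p q}"

definition conn_classes :: "nat \<Rightarrow> nat \<Rightarrow> nat list set set" where
  "conn_classes k n = positions k n // conn_rel k n"

definition bar :: "nat \<Rightarrow> nat \<Rightarrow> nat" where
  "bar k x = min x (k - 1 - x)"

definition Tset :: "nat \<Rightarrow> nat \<Rightarrow> nat \<Rightarrow> nat list \<Rightarrow> nat list set" where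
  "Tset k n m js = {p \<in> positions k n. card (bdry k p) = m \<and>
      image_mset (\<lambda>i. bar k (p ! i)) (mset_set ({0..<n} - bdry k p)) = mset js}"

definition admissible :: "nat \<Rightarrow> nat \<Rightarrow> nat \<Rightarrow> nat list \<Rightarrow> bool" where
  "admissible k n m js = (1 \<le> m \<and> m \<le> n \<and> length js = n - m \<and> sorted js \<and>
      (\<forall>j\<in>set js. 1 \<le> j \<and> j \<le> (k - 1) div 2))"

definition exceptional :: "nat \<Rightarrow> nat \<Rightarrow> nat list \<Rightarrow> bool" where
  "exceptional k m js = (m = 1 \<and> sorted_wrt (<) js \<and> (\<forall>j\<in>set js. 2 * j < k - 1))"

end

theory Submission
  imports Defs "HOL-Combinatorics.Permutations"
begin

lemma conn_refl: "connected_pos k n p p"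
  unfolding connected_pos_def by (rule exI[of _ "[]"]) (simp add: apply_comb_def)

lemma conn_trans: "connected_pos k n p q \<Longrightarrow> connected_pos k n q r \<Longrightarrow> connected_pos k n p r"
  unfolding connected_pos_def apply_comb_def
  by (metis Un_iff foldl_append set_append)

lemma psi_pos:
  assumes "p \<in> positions k n" "i < n" "j < n" "k \<ge> 1"
  shows "psi k i j p \<in> positions k n"
  using assms unfolding positions_def psi_def
  by (auto simp: set_update_subset_insert[THEN subsetD] dest!: set_update_subset_insert[THEN subsetD])

lemma conn_psi:
  assumes "p \<in> positions k n" "i < n" "j < n" "i \<noteq> j"
  shows "connected_pos k n p (psi k i j p)"
proof -
  have "is_move k n (i, j, \<lambda>l. p ! l)" using assms unfolding is_move_def positions_def by auto
  moreover have "apply_move k n (i, j, \<lambda>l. p ! l) p = psi k i j p" unfolding apply_move_def by simp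
  ultimately show ?thesis unfolding connected_pos_def apply_comb_def
    by (intro exI[of _ "[(i, j, \<lambda>l. p ! l)]"]) simp
qed

lemma move_cases:
  assumes "is_move k n mv"
  shows "apply_move k n mv p = p \<or> (\<exists>i j. i < n \<and> j < n \<and> i \<noteq> j \<and> apply_move k n mv p = psi k i j p)"
  using assms unfolding is_move_def apply_move_def by (cases mv) auto

lemma conn_induct:
  assumes "connected_pos k n p q" "p \<in> positions k n" "P p" "k \<ge> 1"
    and step: "\<And>x i j. x \<in> positions k n \<Longrightarrow> P x \<Longrightarrow> i < n \<Longrightarrow> j < n \<Longrightarrow> i \<noteq> j \<Longrightarrow> P (psi k i j x)"
  shows "q \<in> positions k n \<and> P q"
proof -
  obtain ms where ms: "\<forall>mv\<in>set ms. is_move k n mv" "apply_comb k n ms p = q"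
    using assms(1) unfolding connected_pos_def by blast
  have "\<And>p. p \<in> positions k n \<Longrightarrow> P p \<Longrightarrow> apply_comb k n ms p \<in> positions k n \<and> P (apply_comb k n ms p)"
    using ms(1)
  proof (induction ms)
    case Nil then show ?case by (simp add: apply_comb_def)
  next
    case (Cons mv ms)
    have "apply_move k n mv p \<in> positions k n \<and> P (apply_move k n mv p)"
      using move_cases[of k n mv p] Cons.prems psi_pos[of p k n] step \<open>k \<ge> 1\<close> by auto
    then show ?case using Cons.IH[of "apply_move k n mv p"] Cons.prems
      by (simp add: apply_comb_def)
  qed
  then show ?thesis using ms assms(2,3) by blast
qed

lemma psi4:
  assumes "p \<in> positions k n" "i < n" "j < n" "i \<noteq> j"
  shows "psi k i j (psi k i j (psi k i j (psi k i j p))) = p"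
proof -
  have l: "length p = n" and v: "\<And>l. l < n \<Longrightarrow> p ! l < k" using assms(1) unfolding positions_def by auto
  show ?thesis
    by (rule nth_equalityI) (use l v[of i] v[of j] assms(2-4) in \<open>auto simp: psi_def nth_list_update\<close>)
qed

lemma conn_sym:
  assumes "connected_pos k n p q" "p \<in> positions k n" "k \<ge> 1"
  shows "connected_pos k n q p"
proof -
  have "q \<in> positions k n \<and> connected_pos k n q p"
  proof (rule conn_induct[OF assms(1,2) conn_refl assms(3)])
    fix x i j assume x: "x \<in> positions k n" "connected_pos k n x p" "i < n" "j < n" "i \<noteq> j"
    let ?y = "psi k i j x"
    have y1: "?y \<in> positions k n" using psi_pos x assms(3) by blast
    have y2: "psi k i j ?y \<in> positions k n" using psi_pos y1 x assms(3) by blast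
    have y3: "psi k i j (psi k i j ?y) \<in> positions k n" using psi_pos y2 x assms(3) by blast
    have "connected_pos k n ?y (psi k i j (psi k i j (psi k i j ?y)))"
      by (meson conn_psi conn_trans x y1 y2 y3)
    then have "connected_pos k n ?y x" using psi4[OF x(1) x(3-5)] by simp
    then show "connected_pos k n ?y p" using conn_trans x(2) by blast
  qed
  then show ?thesis by blast
qed


definition flipat :: "nat \<Rightarrow> nat \<Rightarrow> nat list \<Rightarrow> nat list" where
  "flipat k i p = p[i := k - 1 - p ! i]"

definition swp :: "nat \<Rightarrow> nat \<Rightarrow> nat list \<Rightarrow> nat list" where
  "swp i j p = p[i := p ! j, j := p ! i]"

lemma posD: "p \<in> positions k n \<Longrightarrow> length p = n \<and> (\<forall>l<n. p ! l < k)"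
  unfolding positions_def by auto

lemma posI: "length p = n \<Longrightarrow> (\<forall>l<n. p ! l < k) \<Longrightarrow> p \<in> positions k n"
  unfolding positions_def by (auto simp: in_set_conv_nth)

lemma flipat_pos: "p \<in> positions k n \<Longrightarrow> k \<ge> 1 \<Longrightarrow> i < n \<Longrightarrow> flipat k i p \<in> positions k n"
  by (rule posI) (auto simp: flipat_def nth_list_update dest!: posD)

lemma swp_pos: "p \<in> positions k n \<Longrightarrow> i < n \<Longrightarrow> j < n \<Longrightarrow> swp i j p \<in> positions k n"
  by (rule posI) (auto simp: swp_def nth_list_update dest!: posD)

lemma psi_eq: "p \<in> positions k n \<Longrightarrow> i < n \<Longrightarrow> j < n \<Longrightarrow> i \<noteq> j \<Longrightarrow> psi k i j p = flipat k i (swp i j p)"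
  by (rule nth_equalityI) (auto simp: psi_def flipat_def swp_def nth_list_update dest!: posD)

lemma psi2: "p \<in> positions k n \<Longrightarrow> i < n \<Longrightarrow> j < n \<Longrightarrow> i \<noteq> j \<Longrightarrow>
   psi k i j (psi k i j p) = flipat k i (flipat k j p)"
  by (rule nth_equalityI) (auto simp: psi_def flipat_def nth_list_update dest!: posD)

lemma flipat_flipat: "p \<in> positions k n \<Longrightarrow> i < n \<Longrightarrow> flipat k i (flipat k i p) = p"
proof -
  assume a: "p \<in> positions k n" "i < n"
  then have "p ! i < k" "i < length p" by (auto dest!: posD)
  then show ?thesis by (rule_tac nth_equalityI) (auto simp: flipat_def nth_list_update)
qed

lemma flipat_comm: "flipat k i (flipat k j p) = flipat k j (flipat k i p)"
  by (cases "i = j") (auto simp: flipat_def nth_list_update list_update_swap)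

lemma swp_swp: "p \<in> positions k n \<Longrightarrow> i < n \<Longrightarrow> j < n \<Longrightarrow> swp i j (swp i j p) = p"
  by (rule nth_equalityI) (auto simp: swp_def nth_list_update dest!: posD)

lemma swp_flipat: "p \<in> positions k n \<Longrightarrow> i < n \<Longrightarrow> j < n \<Longrightarrow> a < n \<Longrightarrow>
  swp i j (flipat k a p) = flipat k (Transposition.transpose i j a) (swp i j p)"
  by (rule nth_equalityI) (auto simp: swp_def flipat_def nth_list_update transpose_def dest!: posD)

lemma permute_list_transpose:
  assumes "a < length v" "b < length v"
  shows "permute_list (Transposition.transpose a b) v = swp a b v"
  by (rule nth_equalityI) (use assms in \<open>auto simp: permute_list_def swp_def nth_list_update transpose_def\<close>)

context
  fixes k n :: nat and p0 :: "nat list"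
  assumes k1: "k \<ge> 1" and n2: "n \<ge> 2" and p0: "p0 \<in> positions k n"
begin

definition Q :: "nat list \<Rightarrow> bool" where
  "Q v = (connected_pos k n p0 v \<or> connected_pos k n p0 (flipat k 0 v))"

lemma conn_psi2:
  assumes "connected_pos k n p0 v" "v \<in> positions k n" "i < n" "j < n" "i \<noteq> j"
  shows "connected_pos k n p0 (flipat k i (flipat k j v))"
proof -
  have "connected_pos k n v (psi k i j (psi k i j v))"
    by (meson assms(2-5) conn_psi conn_trans psi_pos k1)
  then show ?thesis using psi2 assms conn_trans by metis
qed

lemma Q_flip:
  assumes "Q v" "v \<in> positions k n" "a < n"
  shows "Q (flipat k a v)"
proof (cases "a = 0")
  case True
  then show ?thesis using assms flipat_flipat unfolding Q_def by metis
next
  case False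
  have n0: "0 < n" using n2 by simp
  show ?thesis
  proof (cases "connected_pos k n p0 v")
    case True
    then have "connected_pos k n p0 (flipat k a (flipat k 0 v))"
      using conn_psi2 False assms n0 by blast
    then show ?thesis unfolding Q_def by (simp add: flipat_comm)
  next
    case c: False
    then have "connected_pos k n p0 (flipat k 0 v)" using assms unfolding Q_def by blast
    then have "connected_pos k n p0 (flipat k a (flipat k 0 (flipat k 0 v)))"
      using conn_psi2 False assms n0 flipat_pos k1 by blast
    then show ?thesis unfolding Q_def using flipat_flipat assms n0 by metis
  qed
qed

lemma Q_swap0:
  assumes "connected_pos k n p0 v" "v \<in> positions k n" "i < n" "j < n" "i \<noteq> j"
  shows "Q (swp i j v)"
proof -
  have "connected_pos k n p0 (psi k i j v)" using assms conn_psi conn_trans by blast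
  then have "Q (flipat k i (swp i j v))" unfolding Q_def using psi_eq assms by metis
  then have "Q (flipat k i (flipat k i (swp i j v)))"
    using Q_flip assms swp_pos flipat_pos k1 by blast
  then show ?thesis using flipat_flipat swp_pos assms by metis
qed

lemma Q_swap:
  assumes "Q v" "v \<in> positions k n" "i < n" "j < n"
  shows "Q (swp i j v)"
proof (cases "i = j")
  case True
  then have "swp i j v = v" by (simp add: swp_def)
  then show ?thesis using assms by simp
next
  case ij: False
  have n0: "0 < n" using n2 by simp
  show ?thesis
  proof (cases "connected_pos k n p0 v")
    case True
    then show ?thesis using Q_swap0 assms ij by blast
  next
    case False
    then have c: "connected_pos k n p0 (flipat k 0 v)" using assms unfolding Q_def by blast
    have "Q (swp i j (flipat k 0 v))" using Q_swap0[OF c] flipat_pos assms ij k1 n0 by blast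
    then have q: "Q (flipat k (Transposition.transpose i j 0) (swp i j v))"
      using swp_flipat assms n0 by metis
    have t: "Transposition.transpose i j 0 < n" using assms n0 by (auto simp: transpose_def)
    have "Q (flipat k (Transposition.transpose i j 0) (flipat k (Transposition.transpose i j 0) (swp i j v)))"
      using Q_flip[OF q] flipat_pos swp_pos assms k1 t by blast
    then show ?thesis using flipat_flipat swp_pos assms t by metis
  qed
qed

lemma Q_perm:
  assumes "Q v" "v \<in> positions k n" "mset u = mset v"
  shows "Q u"
proof -
  obtain \<pi> where pi: "\<pi> permutes {..<length v}" "permute_list \<pi> v = u"
    using mset_eq_permutation[OF assms(3)] by blast
  have lv: "length v = n" using assms(2) by (auto dest: posD)
  have "Q (permute_list \<pi> v) \<and> permute_list \<pi> v \<in> positions k n"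
    using finite_lessThan pi(1)
  proof (induction rule: permutes_rev_induct)
    case id
    then show ?case using assms by simp
  next
    case (swap a b p)
    have e: "permute_list (p \<circ> Transposition.transpose a b) v = swp a b (permute_list p v)"
      using permute_list_compose[of "Transposition.transpose a b" v p] swap lv
      permute_list_transpose[of a "permute_list p v" b]
      by (simp add: permutes_swap_id)
    show ?case unfolding e using swap Q_swap swp_pos lv by auto
  qed
  then show ?thesis using pi by simp
qed

end


lemma bar_le: "bar k x \<le> x" by (simp add: bar_def)

lemma bar_cases: "bar k x = x \<or> bar k x = k - 1 - x" by (auto simp: bar_def)

lemma bar_flip: "x < k \<Longrightarrow> bar k (k - 1 - x) = bar k x" by (auto simp: bar_def)

lemma bar_pos: "x < k \<Longrightarrow> x \<noteq> 0 \<Longrightarrow> x \<noteq> k - 1 \<Longrightarrow> bar k x \<ge> 1" by (auto simp: bar_def)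

lemma bar_0: "bar k 0 = 0" and bar_k1: "bar k (k - 1) = 0" by (auto simp: bar_def)

lemma canon_Q:
  assumes k1: "k \<ge> 1" and n2: "n \<ge> 2" and p: "p \<in> positions k n"
  shows "connected_pos k n p (sort (map (bar k) p)) \<or> connected_pos k n p (flipat k 0 (sort (map (bar k) p)))"
proof -
  have lp: "length p = n" and pv: "\<And>l. l < n \<Longrightarrow> p ! l < k" using p by (auto dest: posD)
  define g where "g t = map (\<lambda>i. if i < t then bar k (p!i) else p!i) [0..<n]" for t
  have gpos: "g t \<in> positions k n" for t
    by (rule posI) (auto simp: g_def pv intro: le_less_trans[OF bar_le])
  have "Q k n p (g t)" for t
  proof (induction t)
    case 0
    have "g 0 = p" unfolding g_def using lp by (auto intro!: nth_equalityI)
    then show ?case unfolding Q_def[OF k1 n2 p] using conn_refl by simp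
  next
    case (Suc t)
    show ?case
    proof (cases "t < n \<and> bar k (p ! t) \<noteq> p ! t")
      case True
      then have "g (Suc t) = flipat k t (g t)"
        using bar_cases[of k "p!t"] by (auto simp: g_def flipat_def nth_list_update intro!: nth_equalityI)
      then show ?thesis using Q_flip[OF k1 n2 p Suc.IH gpos] True by simp
    next
      case False
      then have "g (Suc t) = g t" by (auto simp: g_def less_Suc_eq intro!: nth_equalityI)
      then show ?thesis using Suc.IH by simp
    qed
  qed
  moreover have "g n = map (bar k) p" unfolding g_def using lp by (auto intro!: nth_equalityI)
  ultimately have "Q k n p (map (bar k) p)" by metis
  then have "Q k n p (sort (map (bar k) p))"
    using Q_perm[OF k1 n2 p] gpos[of n] \<open>g n = map (bar k) p\<close> by auto
  then show ?thesis unfolding Q_def[OF k1 n2 p] .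
qed

lemma map_bar_mset:
  assumes p: "p \<in> positions k n"
  shows "mset (map (bar k) p) = replicate_mset (card (bdry k p)) 0 +
     image_mset (\<lambda>i. bar k (p!i)) (mset_set ({0..<n} - bdry k p))"
proof -
  have lp: "length p = n" using p by (auto dest: posD)
  let ?B = "bdry k p"
  have B: "?B \<subseteq> {0..<n}" unfolding bdry_def lp by auto
  have "map (bar k) p = map (\<lambda>i. bar k (p!i)) [0..<n]" using lp by (auto intro!: nth_equalityI)
  then have 1: "mset (map (bar k) p) = image_mset (\<lambda>i. bar k (p!i)) (mset_set {0..<n})" by simp
  have 2: "mset_set {0..<n} = mset_set ?B + mset_set ({0..<n} - ?B)"
    using B by (metis Diff_disjoint Un_Diff_cancel2 Un_absorb1 finite_Diff finite_atLeastLessThan finite_subset mset_set_Union sup_commute)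
  have 3: "image_mset (\<lambda>i. bar k (p!i)) (mset_set ?B) = image_mset (\<lambda>i. 0) (mset_set ?B)"
    by (rule image_mset_cong) (auto simp: bdry_def bar_def)
  have 4: "image_mset (\<lambda>i. (0::nat)) (mset_set ?B) = replicate_mset (card ?B) 0" by (simp add: image_mset_const_eq)
  show ?thesis unfolding 1 2 image_mset_union 3 4 ..
qed

lemma nonbdry_pos:
  assumes p: "p \<in> positions k n"
  shows "\<forall>x \<in># image_mset (\<lambda>i. bar k (p!i)) (mset_set ({0..<n} - bdry k p)). x \<ge> 1"
proof
  fix x assume "x \<in># image_mset (\<lambda>i. bar k (p!i)) (mset_set ({0..<n} - bdry k p))"
  then obtain i where i: "i < n" "i \<notin> bdry k p" "x = bar k (p!i)" by auto
  then have "p!i < k" "p!i \<noteq> 0" "p!i \<noteq> k - 1" using p by (auto simp: bdry_def dest!: posD)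
  then show "x \<ge> 1" using bar_pos i by auto
qed

lemma Tset_char:
  assumes "0 \<notin> set js"
  shows "p \<in> Tset k n m js \<longleftrightarrow> p \<in> positions k n \<and> mset (map (bar k) p) = replicate_mset m 0 + mset js"
proof
  assume "p \<in> Tset k n m js"
  then show "p \<in> positions k n \<and> mset (map (bar k) p) = replicate_mset m 0 + mset js"
    unfolding Tset_def using map_bar_mset by auto
next
  assume a: "p \<in> positions k n \<and> mset (map (bar k) p) = replicate_mset m 0 + mset js"
  let ?I = "image_mset (\<lambda>i. bar k (p!i)) (mset_set ({0..<n} - bdry k p))"
  have e: "replicate_mset (card (bdry k p)) 0 + ?I = replicate_mset m 0 + mset js"
    using a map_bar_mset by metis
  have "count ?I 0 = 0" using nonbdry_pos[of p k n] a by (metis count_inI not_one_le_zero)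
  moreover have "count (mset js) 0 = 0" using assms by (simp add: count_mset_0_iff)
  ultimately have "card (bdry k p) = m" using arg_cong[OF e, of "\<lambda>M. count M 0"] by simp
  then have "?I = mset js" using e by simp
  then show "p \<in> Tset k n m js" unfolding Tset_def using a \<open>card (bdry k p) = m\<close> by simp
qed

lemma Tset_sort:
  assumes "0 \<notin> set js" "sorted js" "p \<in> Tset k n m js"
  shows "sort (map (bar k) p) = replicate m 0 @ js"
  by (rule properties_for_sort) (use assms Tset_char[OF assms(1)] in \<open>auto simp: sorted_append\<close>)

lemma map_bar_psi: "p \<in> positions k n \<Longrightarrow> i < n \<Longrightarrow> j < n \<Longrightarrow> i \<noteq> j \<Longrightarrow>
  map (bar k) (psi k i j p) = swp i j (map (bar k) p)"
  by (rule nth_equalityI) (auto simp: psi_def swp_def nth_list_update bar_def dest!: posD)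

lemma mset_swp: "i < length xs \<Longrightarrow> j < length xs \<Longrightarrow> mset (swp i j xs) = mset xs"
  unfolding swp_def by (metis list_update_swap mset_swap list_update_overwrite)

lemma conn_mset:
  assumes "connected_pos k n p q" "p \<in> positions k n" "k \<ge> 1"
  shows "q \<in> positions k n \<and> mset (map (bar k) q) = mset (map (bar k) p)"
proof (rule conn_induct[OF assms(1,2) _ assms(3)])
  fix x i j assume x: "x \<in> positions k n" "mset (map (bar k) x) = mset (map (bar k) p)" "i < n" "j < n" "i \<noteq> j"
  then show "mset (map (bar k) (psi k i j x)) = mset (map (bar k) p)"
    using map_bar_psi mset_swp by (metis length_map posD)
qed simp

lemma conn_Tset:
  assumes "0 \<notin> set js" "p \<in> Tset k n m js" "connected_pos k n p q" "k \<ge> 1"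
  shows "q \<in> Tset k n m js"
  using conn_mset[OF assms(3) _ assms(4)] assms Tset_char by metis

lemma E1:
  assumes "c \<in> positions k n" "x < n" "y < n" "x \<noteq> y" "c ! x = c ! y"
  shows "connected_pos k n c (flipat k x c)"
proof -
  have "psi k x y c = flipat k x c"
    by (rule nth_equalityI) (use assms in \<open>auto simp: psi_def flipat_def nth_list_update dest!: posD\<close>)
  then show ?thesis using conn_psi assms by metis
qed

lemma E2:
  assumes "v \<in> positions k n" "x < n" "x \<noteq> 0" "connected_pos k n v (flipat k x v)" "k \<ge> 1"
  shows "connected_pos k n v (flipat k 0 v)"
proof -
  let ?w = "flipat k x v"
  have n0: "0 < n" using assms by simp
  have w: "?w \<in> positions k n" using flipat_pos assms by blast
  have "connected_pos k n ?w (psi k x 0 (psi k x 0 ?w))"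
    by (meson assms conn_psi conn_trans psi_pos w n0)
  moreover have "psi k x 0 (psi k x 0 ?w) = flipat k 0 v"
    using psi2[OF w assms(2) n0 assms(3)] flipat_comm flipat_flipat assms by metis
  ultimately show ?thesis using assms conn_trans by metis
qed

lemma E3: "k - 1 - c ! x = c ! x \<Longrightarrow> flipat k x c = c"
  by (simp add: flipat_def)

definition S :: "nat \<Rightarrow> nat list \<Rightarrow> int" where
  "S k p = (\<Prod>i<length p. if k - 1 < 2 * (p!i) then -1 else 1)"

lemma prod_two:
  assumes "finite A" "i \<in> A" "j \<in> A" "i \<noteq> j"
  shows "prod g A = g i * g j * prod g (A - {i, j})"
proof -
  have "prod g A = g i * prod g (A - {i})" using assms prod.remove by metis
  also have "prod g (A - {i}) = g j * prod g (A - {i} - {j})" using assms prod.remove[of "A - {i}" j g] by auto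
  finally show ?thesis by (simp add: Diff_insert2[symmetric] insert_commute mult.assoc)
qed

lemma S_psi:
  assumes "p \<in> positions k n" "i < n" "j < n" "i \<noteq> j" "2 * (p!j) \<noteq> k - 1"
  shows "S k (psi k i j p) = - S k p"
proof -
  define f where "f x = (if k - 1 < 2 * x then -1 else (1::int))" for x
  have lp: "length p = n" and pj: "p ! j < k" using assms by (auto dest!: posD)
  have lq: "length (psi k i j p) = n" using lp by (simp add: psi_def)
  have 1: "S k (psi k i j p) = (\<Prod>l<n. f (psi k i j p ! l))" unfolding S_def f_def lq ..
  have 2: "(\<Prod>l<n. f (psi k i j p ! l)) = f (psi k i j p ! i) * f (psi k i j p ! j) * (\<Prod>l\<in>{..<n} - {i,j}. f (psi k i j p ! l))"
    by (rule prod_two) (use assms in auto)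
  have 3: "(\<Prod>l\<in>{..<n} - {i,j}. f (psi k i j p ! l)) = (\<Prod>l\<in>{..<n} - {i,j}. f (p ! l))"
    by (rule prod.cong) (auto simp: psi_def)
  have 4: "psi k i j p ! i = k - 1 - p ! j" "psi k i j p ! j = p ! i" using assms lp by (auto simp: psi_def nth_list_update)
  have 5: "f (k - 1 - p ! j) = - f (p ! j)" using pj assms(5) by (auto simp: f_def)
  have 6: "S k p = f (p ! i) * f (p ! j) * (\<Prod>l\<in>{..<n} - {i,j}. f (p ! l))"
    unfolding S_def f_def lp by (rule prod_two) (use assms in auto)
  show ?thesis unfolding 1 2 3 4 5 6 by simp
qed

lemma perm_unique:
  assumes "\<pi>1 permutes {..<length xs}" "\<pi>2 permutes {..<length xs}" "distinct xs"
    "permute_list \<pi>1 xs = permute_list \<pi>2 xs"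
  shows "\<pi>1 = \<pi>2"
proof
  fix i show "\<pi>1 i = \<pi>2 i"
  proof (cases "i < length xs")
    case True
    have "xs ! \<pi>1 i = xs ! \<pi>2 i" using permute_list_nth assms True by metis
    moreover have "\<pi>1 i < length xs" "\<pi>2 i < length xs" using permutes_in_image assms True by fastforce+
    ultimately show ?thesis using assms(3) nth_eq_iff_index_eq by metis
  next
    case False
    then show ?thesis using permutes_not_in assms by (metis lessThan_iff)
  qed
qed

lemma mid_bar: "2 * x = k - 1 \<Longrightarrow> bar k x = x" by (auto simp: bar_def)

lemma DInv:
  assumes ref: "distinct ref" "length ref = n" "\<forall>r\<in>set ref. 2 * r \<noteq> k - 1" and k1: "k \<ge> 1"
    and c: "connected_pos k n p q" "p \<in> positions k n" "mset (map (bar k) p) = mset ref"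
    and pi: "\<pi> permutes {..<n}" "permute_list \<pi> ref = map (bar k) p"
    and pi': "\<pi>' permutes {..<n}" "permute_list \<pi>' ref = map (bar k) q"
  shows "sign \<pi>' * S k q = sign \<pi> * S k p"
proof -
  have "q \<in> positions k n \<and> (mset (map (bar k) q) = mset ref \<and> (\<exists>\<sigma>. \<sigma> permutes {..<n} \<and>
     permute_list \<sigma> ref = map (bar k) q \<and> sign \<sigma> * S k q = sign \<pi> * S k p))"
  proof (rule conn_induct[OF c(1,2) _ k1])
    show "mset (map (bar k) p) = mset ref \<and> (\<exists>\<sigma>. \<sigma> permutes {..<n} \<and>
     permute_list \<sigma> ref = map (bar k) p \<and> sign \<sigma> * S k p = sign \<pi> * S k p)"
      using c pi by blast
  next
    fix x i j assume x: "x \<in> positions k n" "mset (map (bar k) x) = mset ref \<and> (\<exists>\<sigma>. \<sigma> permutes {..<n} \<and>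
     permute_list \<sigma> ref = map (bar k) x \<and> sign \<sigma> * S k x = sign \<pi> * S k p)" "i < n" "j < n" "i \<noteq> j"
    then obtain \<sigma> where s: "\<sigma> permutes {..<n}" "permute_list \<sigma> ref = map (bar k) x"
      "sign \<sigma> * S k x = sign \<pi> * S k p" by blast
    have lx: "length x = n" using x by (auto dest: posD)
    let ?t = "Transposition.transpose i j"
    have tp: "?t permutes {..<n}" using x by (simp add: permutes_swap_id)
    have e1: "map (bar k) (psi k i j x) = swp i j (map (bar k) x)" using map_bar_psi x by metis
    have e2: "permute_list (\<sigma> \<circ> ?t) ref = swp i j (map (bar k) x)"
      using permute_list_compose[of ?t ref \<sigma>] tp ref(2) s(2) permute_list_transpose[of i "map (bar k) x" j] x lx
      by simp
    have xj: "x ! j < k" using x by (auto dest: posD)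
    have "bar k (x ! j) \<in> set ref" using x lx by (metis length_map nth_map nth_mem set_mset_mset)
    then have "2 * (x ! j) \<noteq> k - 1" using ref(3) mid_bar by metis
    then have sx: "S k (psi k i j x) = - S k x" using S_psi x by blast
    have "sign (\<sigma> \<circ> ?t) = - sign \<sigma>"
      using sign_compose[of \<sigma> ?t] sign_swap_id[of i j] x s tp
      by (metis finite_lessThan mult_minus1_right permutation_permutes)
    then have "sign (\<sigma> \<circ> ?t) * S k (psi k i j x) = sign \<pi> * S k p" using sx s(3) by simp
    moreover have "(\<sigma> \<circ> ?t) permutes {..<n}" using s tp permutes_compose by blast
    moreover have "mset (map (bar k) (psi k i j x)) = mset ref"
      using x e1 mset_swp lx by (metis length_map)
    ultimately show "mset (map (bar k) (psi k i j x)) = mset ref \<and> (\<exists>\<sigma>. \<sigma> permutes {..<n} \<and>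
     permute_list \<sigma> ref = map (bar k) (psi k i j x) \<and> sign \<sigma> * S k (psi k i j x) = sign \<pi> * S k p)"
      using e1 e2 by metis
  qed
  then obtain \<sigma> where s: "\<sigma> permutes {..<n}" "permute_list \<sigma> ref = map (bar k) q"
      "sign \<sigma> * S k q = sign \<pi> * S k p" by blast
  have "\<sigma> = \<pi>'" using perm_unique[of \<sigma> ref \<pi>'] s pi' ref by simp
  then show ?thesis using s by simp
qed

lemma adm_facts:
  assumes "admissible k n m js" "k \<ge> 2"
  shows "0 \<notin> set js" "sorted js" "length js = n - m" "1 \<le> m" "m \<le> n"
    "\<forall>j\<in>set js. j < k \<and> bar k j = j"
  using assms unfolding admissible_def by (auto simp: bar_def)

lemma c_in_Tset:
  assumes "admissible k n m js" "k \<ge> 2"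
  shows "replicate m 0 @ js \<in> Tset k n m js"
proof -
  note a = adm_facts[OF assms]
  have "map (bar k) js = js" using a(6) by (induction js) auto
  then have "mset (map (bar k) (replicate m 0 @ js)) = replicate_mset m 0 + mset js"
    by (simp add: bar_0)
  moreover have "replicate m 0 @ js \<in> positions k n"
    unfolding positions_def using a assms(2) by auto
  ultimately show ?thesis using Tset_char[OF a(1)] by blast
qed

lemma reach_c:
  assumes "admissible k n m js" "k \<ge> 2" "n \<ge> 2" "q \<in> Tset k n m js"
  shows "connected_pos k n q (replicate m 0 @ js) \<or> connected_pos k n q (flipat k 0 (replicate m 0 @ js))"
proof -
  note a = adm_facts[OF assms(1,2)]
  have q: "q \<in> positions k n" using assms(4) Tset_def by blast
  show ?thesis using canon_Q[of k n q] Tset_sort[OF a(1) a(2) assms(4)] assms q by simp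
qed

lemma class_from:
  assumes "admissible k n m js" "k \<ge> 2" "n \<ge> 2" "c \<in> Tset k n m js"
    "\<forall>q \<in> X. q \<in> Tset k n m js \<and> connected_pos k n c q"
    "\<forall>q. q \<in> Tset k n m js \<and> connected_pos k n c q \<longrightarrow> q \<in> X"
  shows "X \<in> conn_classes k n"
proof -
  note a = adm_facts[OF assms(1,2)]
  have cp: "c \<in> positions k n" using assms Tset_def by blast
  have "X = conn_rel k n `` {c}"
  proof (intro equalityI subsetI)
    fix q assume "q \<in> X"
    then show "q \<in> conn_rel k n `` {c}" using assms(5) cp unfolding conn_rel_def Tset_def by auto
  next
    fix q assume "q \<in> conn_rel k n `` {c}"
    then have "connected_pos k n c q" unfolding conn_rel_def by auto
    then show "q \<in> X" using assms(6) conn_Tset[OF a(1) assms(4)] assms(2) by auto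
  qed
  then show ?thesis unfolding conn_classes_def using cp by (simp add: quotientI)
qed

lemma part5:
  assumes "admissible k n m js" "\<not> exceptional k m js" "k \<ge> 2" "n \<ge> 3"
  shows "Tset k n m js \<in> conn_classes k n"
proof -
  note a = adm_facts[OF assms(1,3)]
  define c where "c = replicate m 0 @ js"
  have cT: "c \<in> Tset k n m js" using c_in_Tset assms c_def by blast
  have cp: "c \<in> positions k n" using cT Tset_def by blast
  have lc: "length c = n" using cp by (auto dest: posD)
  have k1: "k \<ge> 1" using assms by simp
  have cc': "connected_pos k n c (flipat k 0 c)"
  proof (cases "m \<ge> 2")
    case True
    then have "c ! 0 = c ! 1" by (simp add: c_def nth_append)
    then show ?thesis using E1[OF cp, of 0 1] assms by simp
  next
    case False
    then have m1: "m = 1" using a by simp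
    then have c0: "c = 0 # js" by (simp add: c_def)
    have "\<exists>x. x < n \<and> x \<noteq> 0 \<and> connected_pos k n c (flipat k x c)"
    proof (cases "sorted_wrt (<) js")
      case False
      then obtain i j where ij: "i < j" "j < length js" "\<not> js ! i < js ! j"
        unfolding sorted_wrt_iff_nth_less by blast
      then have "js ! i \<le> js ! j" using a(2) by (simp add: sorted_iff_nth_mono)
      then have "c ! Suc i = c ! Suc j" using ij c0 by simp
      then have "connected_pos k n c (flipat k (Suc i) c)" using E1[OF cp, of "Suc i" "Suc j"] ij lc c0 by simp
      then show ?thesis using ij lc c0 by (intro exI[of _ "Suc i"]) simp
    next
      case True
      then obtain j where j: "j \<in> set js" "\<not> 2 * j < k - 1" using assms(2) m1 unfolding exceptional_def by blast
      then have "j \<le> (k - 1) div 2" using assms(1) unfolding admissible_def by blast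
      with j have "2 * j = k - 1" by linarith
      obtain i where i: "i < length js" "js ! i = j" using j in_set_conv_nth by metis
      have "k - 1 - c ! Suc i = c ! Suc i" using i c0 \<open>2 * j = k - 1\<close> by simp
      then have "flipat k (Suc i) c = c" by (rule E3)
      then show ?thesis using i lc c0 conn_refl by (intro exI[of _ "Suc i"]) simp
    qed
    then show ?thesis using E2[OF cp] k1 by blast
  qed
  have c'p: "flipat k 0 c \<in> positions k n" using flipat_pos cp k1 assms by simp
  have c'c: "connected_pos k n (flipat k 0 c) c" using conn_sym[OF cc' cp k1] .
  show ?thesis
  proof (rule class_from[OF assms(1,3) _ cT])
    show "n \<ge> 2" using assms by simp
    show "\<forall>q\<in>Tset k n m js. q \<in> Tset k n m js \<and> connected_pos k n c q"
    proof
      fix q assume q: "q \<in> Tset k n m js"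
      then have qp: "q \<in> positions k n" using Tset_def by blast
      have "connected_pos k n q c" using reach_c[OF assms(1,3) _ q] assms c_def c'c conn_trans by force
      then show "q \<in> Tset k n m js \<and> connected_pos k n c q" using q conn_sym qp k1 by blast
    qed
  qed simp
qed

lemma S_Cons: "S k (x # xs) = (if k - 1 < 2 * x then -1 else 1) * S k xs"
  unfolding S_def by (simp add: prod.lessThan_Suc_shift del: prod.lessThan_Suc)

lemma S_small: "\<forall>x\<in>set xs. \<not> k - 1 < 2 * x \<Longrightarrow> S k xs = 1"
  by (induction xs) (auto simp: S_Cons, simp add: S_def)

lemma part6:
  assumes "admissible k n m js" "exceptional k m js" "k \<ge> 2" "n \<ge> 3"
  shows "let A = {q \<in> Tset k n m js. connected_pos k n (0 # js) q} in
             A \<in> conn_classes k n \<and> Tset k n m js - A \<in> conn_classes k n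
             \<and> (k - 1) # js \<in> Tset k n m js - A"
proof -
  note a = adm_facts[OF assms(1,3)]
  have m1: "m = 1" and st: "sorted_wrt (<) js" and sm: "\<forall>j\<in>set js. 2 * j < k - 1"
    using assms(2) unfolding exceptional_def by auto
  have k1: "k \<ge> 1" using assms by simp
  define c where "c = 0 # js"
  define c' where "c' = (k - 1) # js"
  have cT: "c \<in> Tset k n m js" using c_in_Tset[OF assms(1,3)] m1 c_def by simp
  have cp: "c \<in> positions k n" using cT Tset_def by blast
  have lc: "length c = n" using cp by (auto dest: posD)
  have fc: "flipat k 0 c = c'" by (simp add: c_def c'_def flipat_def)
  have c'p: "c' \<in> positions k n" using flipat_pos[OF cp k1, of 0] fc assms by simp
  have mbj: "map (bar k) js = js" using a(6) by (induction js) auto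
  have mb: "map (bar k) c = c" "map (bar k) c' = c" using mbj by (auto simp: c_def c'_def bar_def)
  have c'T: "c' \<in> Tset k n m js" using Tset_char[OF a(1)] cT c'p mb by metis
  have dist: "distinct c" using st a(1) by (simp add: c_def strict_sorted_iff)
  have nomid: "\<forall>r\<in>set c. 2 * r \<noteq> k - 1" using sm assms(3) by (auto simp: c_def)
  have Sc: "S k c = 1" using sm by (intro S_small) (auto simp: c_def)
  have "S k js = 1" using sm by (intro S_small) auto
  then have Sc': "S k c' = -1" using assms(3) by (simp add: c'_def S_Cons)
  have ncc': "\<not> connected_pos k n c c'"
  proof
    assume "connected_pos k n c c'"
    then have "sign id * S k c' = sign id * S k c"
      using DInv[OF dist lc nomid k1 _ cp _ permutes_id _ permutes_id] mb by simp
    then show False using Sc Sc' by simp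
  qed
  have reach: "connected_pos k n q c \<or> connected_pos k n q c'" if "q \<in> Tset k n m js" for q
    using reach_c[OF assms(1,3) _ that] assms m1 c_def fc by simp
  let ?A = "{q \<in> Tset k n m js. connected_pos k n (0 # js) q}"
  have n2: "n \<ge> 2" using assms by simp
  have 1: "?A \<in> conn_classes k n"
    by (rule class_from[OF assms(1,3) n2 cT]) (auto simp: c_def)
  have 2: "Tset k n m js - ?A \<in> conn_classes k n"
  proof (rule class_from[OF assms(1,3) n2 c'T])
    show "\<forall>q\<in>Tset k n m js - ?A. q \<in> Tset k n m js \<and> connected_pos k n c' q"
    proof
      fix q assume q: "q \<in> Tset k n m js - ?A"
      then have qp: "q \<in> positions k n" using Tset_def by blast
      have "\<not> connected_pos k n q c" using q conn_sym qp k1 c_def by blast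
      then have "connected_pos k n q c'" using reach q by blast
      then show "q \<in> Tset k n m js \<and> connected_pos k n c' q" using q conn_sym qp k1 by blast
    qed
    show "\<forall>q. q \<in> Tset k n m js \<and> connected_pos k n c' q \<longrightarrow> q \<in> Tset k n m js - ?A"
    proof (intro allI impI)
      fix q assume q: "q \<in> Tset k n m js \<and> connected_pos k n c' q"
      have "\<not> connected_pos k n c q"
      proof
        assume "connected_pos k n c q"
        moreover have "connected_pos k n q c'" using q conn_sym c'p k1 by blast
        ultimately show False using ncc' conn_trans by blast
      qed
      then show "q \<in> Tset k n m js - ?A" using q c_def by blast
    qed
  qed
  have 3: "(k - 1) # js \<in> Tset k n m js - ?A" using c'T ncc' c_def c'_def by blast
  show ?thesis unfolding Let_def using 1 2 3 by blast
qed

lemma bdry_sub: "p \<in> positions k n \<Longrightarrow> bdry k p \<subseteq> {0..<n}"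
  unfolding bdry_def by (auto dest: posD)

lemma part3:
  assumes "admissible k n m1 js1" "admissible k n m2 js2" "(m1, js1) \<noteq> (m2, js2)"
  shows "Tset k n m1 js1 \<inter> Tset k n m2 js2 = {}"
proof (rule ccontr)
  assume "Tset k n m1 js1 \<inter> Tset k n m2 js2 \<noteq> {}"
  then obtain p where "p \<in> Tset k n m1 js1" "p \<in> Tset k n m2 js2" by blast
  then have "m1 = m2" "mset js1 = mset js2" unfolding Tset_def by auto
  moreover have "sorted js1" "sorted js2" using assms unfolding admissible_def by auto
  ultimately have "js1 = js2" by (metis properties_for_sort sorted_sort_id)
  then show False using assms \<open>m1 = m2\<close> by simp
qed

lemma part4:
  assumes "k \<ge> 2"
  shows "{p \<in> positions k n. bdry k p \<noteq> {}} = (\<Union>(m, js)\<in>{(m, js). admissible k n m js}. Tset k n m js)"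
proof (intro equalityI subsetI)
  fix p assume "p \<in> {p \<in> positions k n. bdry k p \<noteq> {}}"
  then have p: "p \<in> positions k n" "bdry k p \<noteq> {}" by auto
  let ?B = "bdry k p"
  let ?I = "image_mset (\<lambda>i. bar k (p!i)) (mset_set ({0..<n} - ?B))"
  define js where "js = sorted_list_of_multiset ?I"
  have B: "?B \<subseteq> {0..<n}" using bdry_sub p by blast
  have fB: "finite ?B" using B finite_subset by blast
  have mj: "mset js = ?I" unfolding js_def by simp
  have "admissible k n (card ?B) js"
    unfolding admissible_def
  proof (intro conjI)
    show "1 \<le> card ?B" using p fB by (simp add: Suc_leI card_gt_0_iff)
    show "card ?B \<le> n" using card_mono[OF _ B] by simp
    have "length js = size ?I" using mj by (metis size_mset)
    also have "\<dots> = card ({0..<n} - ?B)" by simp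
    also have "\<dots> = n - card ?B" using B fB by (simp add: card_Diff_subset)
    finally show "length js = n - card ?B" .
    show "sorted js" unfolding js_def by simp
    show "\<forall>j\<in>set js. 1 \<le> j \<and> j \<le> (k - 1) div 2"
    proof
      fix j assume "j \<in> set js"
      then have "j \<in># ?I" using mj by (metis set_mset_mset)
      then have j1: "1 \<le> j" using nonbdry_pos[OF p(1)] by blast
      obtain i where "i < n" "j = bar k (p ! i)" using \<open>j \<in># ?I\<close> by auto
      moreover have "p ! i < k" using p \<open>i < n\<close> by (auto dest: posD)
      ultimately have "2 * j \<le> k - 1" by (auto simp: bar_def)
      then show "1 \<le> j \<and> j \<le> (k - 1) div 2" using j1 by presburger
    qed
  qed
  moreover have "p \<in> Tset k n (card ?B) js" unfolding Tset_def using p mj by simp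
  ultimately show "p \<in> (\<Union>(m, js)\<in>{(m, js). admissible k n m js}. Tset k n m js)" by blast
next
  fix p assume "p \<in> (\<Union>(m, js)\<in>{(m, js). admissible k n m js}. Tset k n m js)"
  then obtain m js where "admissible k n m js" "p \<in> Tset k n m js" by blast
  then show "p \<in> {p \<in> positions k n. bdry k p \<noteq> {}}" unfolding admissible_def Tset_def by auto
qed

lemma strict_lb: "sorted_wrt (<) xs \<Longrightarrow> \<forall>x\<in>set xs. a \<le> x \<Longrightarrow> r < length xs \<Longrightarrow> (xs ! r :: nat) \<ge> a + r"
proof (induction xs arbitrary: a r)
  case Nil then show ?case by simp
next
  case (Cons x xs)
  show ?case
  proof (cases r)
    case 0 then show ?thesis using Cons by simp
  next
    case (Suc r')
    have "\<forall>y\<in>set xs. Suc a \<le> y" using Cons.prems by fastforce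
    then have "xs ! r' \<ge> Suc a + r'" using Cons.IH[of "Suc a" r'] Cons.prems Suc by simp
    then show ?thesis using Suc by simp
  qed
qed

lemma part7:
  assumes "n \<ge> 3" "length js = n - 1" "sorted_wrt (<) js" "\<forall>j\<in>set js. 1 \<le> j \<and> 2 * j < k - 1"
  shows "k \<ge> 2 * n"
proof -
  have "js ! (n - 2) \<ge> 1 + (n - 2)" using strict_lb[OF assms(3), of 1 "n - 2"] assms by auto
  moreover have "js ! (n - 2) \<in> set js" using assms by simp
  ultimately show ?thesis using assms(4) by fastforce
qed

theorem mainTheorem1:
  fixes k n :: nat
  assumes "k \<ge> 2" and "n \<ge> 3"
  shows
    "positions k n = (\<Union>m\<in>{0..n}. {p \<in> positions k n. card (bdry k p) = m})
     \<and> (\<forall>m1 m2. m1 \<noteq> m2 \<longrightarrow>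
          {p \<in> positions k n. card (bdry k p) = m1} \<inter> {p \<in> positions k n. card (bdry k p) = m2} = {})
     \<and> (\<forall>m1 js1 m2 js2. admissible k n m1 js1 \<and> admissible k n m2 js2 \<and> (m1, js1) \<noteq> (m2, js2)
          \<longrightarrow> Tset k n m1 js1 \<inter> Tset k n m2 js2 = {})
     \<and> {p \<in> positions k n. bdry k p \<noteq> {}} = (\<Union>(m, js)\<in>{(m, js). admissible k n m js}. Tset k n m js)
     \<and> (\<forall>m js. admissible k n m js \<and> \<not> exceptional k m js \<longrightarrow> Tset k n m js \<in> conn_classes k n)
     \<and> (\<forall>m js. admissible k n m js \<and> exceptional k m js \<longrightarrow>
          (let A = {q \<in> Tset k n m js. connected_pos k n (0 # js) q} in
             A \<in> conn_classes k n \<and> Tset k n m js - A \<in> conn_classes k n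
             \<and> (k - 1) # js \<in> Tset k n m js - A))
     \<and> ((\<exists>js. length js = n - 1 \<and> sorted_wrt (<) js \<and> (\<forall>j\<in>set js. 1 \<le> j \<and> 2 * j < k - 1))
          \<longrightarrow> k \<ge> 2 * n)"
proof (intro conjI allI impI)
  show "positions k n = (\<Union>m\<in>{0..n}. {p \<in> positions k n. card (bdry k p) = m})"
  proof (intro equalityI subsetI)
    fix p assume p: "p \<in> positions k n"
    have "card (bdry k p) \<le> n" using card_mono[OF _ bdry_sub[OF p]] by simp
    then show "p \<in> (\<Union>m\<in>{0..n}. {p \<in> positions k n. card (bdry k p) = m})" using p by auto
  qed auto
  show "\<And>m1 m2. m1 \<noteq> m2 \<Longrightarrow>
    {p \<in> positions k n. card (bdry k p) = m1} \<inter> {p \<in> positions k n. card (bdry k p) = m2} = {}" by auto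
  show "\<And>m1 js1 m2 js2. admissible k n m1 js1 \<and> admissible k n m2 js2 \<and> (m1, js1) \<noteq> (m2, js2) \<Longrightarrow>
    Tset k n m1 js1 \<inter> Tset k n m2 js2 = {}" using part3 by blast
  show "{p \<in> positions k n. bdry k p \<noteq> {}} = (\<Union>(m, js)\<in>{(m, js). admissible k n m js}. Tset k n m js)"
    using part4 assms by blast
  show "\<And>m js. admissible k n m js \<and> \<not> exceptional k m js \<Longrightarrow> Tset k n m js \<in> conn_classes k n"
    using part5 assms by blast
  show "\<And>m js. admissible k n m js \<and> exceptional k m js \<Longrightarrow>
    (let A = {q \<in> Tset k n m js. connected_pos k n (0 # js) q} in
             A \<in> conn_classes k n \<and> Tset k n m js - A \<in> conn_classes k n
             \<and> (k - 1) # js \<in> Tset k n m js - A)"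
    using part6 assms by blast
  show "(\<exists>js. length js = n - 1 \<and> sorted_wrt (<) js \<and> (\<forall>j\<in>set js. 1 \<le> j \<and> 2 * j < k - 1)) \<Longrightarrow> k \<ge> 2 * n"
    using part7 assms by blast
qed

end
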